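(* Let $r,n\ge 1$ and work in the group algebra $\mathbb{Z}[\mathsf{G}_{r,n}]$. Put $$\Phi_1:=1+\sum_{t=1}^{r-1}(1^{[t]}\,1),\qquad \Phi_j:=1+\sum_{i=1}^{j-1}(i\,j)+\sum_{t=1}^{r-1}\sum_{i=1}^{j}(i^{[t]}\,j)\quad(2\le j\le n),$$ where $(i\,j)=(i^{[0]}\,j)$. Then $$\Phi_1\Phi_2\cdots\Phi_n=\sum_{\pi\in\mathsf{G}_{r,n}}\pi .$$
   Context: $\mathsf{G}_{r,n}=C_r\wr\mathfrak{S}_n$ is the set of pairs $\pi=(\sigma,\mathbf z)$ with $\sigma\in\mathfrak S_n$ and $\mathbf z=(z_1,\dots,z_n)\in(\mathbb Z/r\mathbb Z)^n$, written as the word (window notation) $\pi=\sigma_1^{[z_1]}\sigma_2^{[z_2]}\cdots\sigma_n^{[z_n]}$; $\sigma_i$ is the base value and $z_i\in\{0,\dots,r-1\}$ the color of the $i$-th letter, colors being read modulo $r$. The product is $(\sigma,\mathbf z)(\rho,\mathbf w)=(\sigma\rho,\mathbf w+\rho(\mathbf z))$ with $\rho(\mathbf z)=(z_{\rho(1)},\dots,z_{\rho(n)})$; the identity is $12\cdots n$ with all colors $0$. For $1\le i<j\le n$ and $t\in\mathbb Z/r\mathbb Z$, $(i^{[t]}\,j)$ denotes the element such that, for every $\pi=\sigma_1^{[z_1]}\cdots\sigma_n^{[z_n]}$, the product $\pi\cdot(i^{[t]}\,j)$ is obtained from $\pi$ by replacing the letter in position $j$ by $\sigma_i^{[z_i+t]}$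 and the letter in position $i$ by $\sigma_j^{[z_j-t]}$. For $1\le i\le n$ and $0<t<r$, $(i^{[t]}\,i)$ denotes the element such that $\pi\cdot(i^{[t]}\,i)$ is obtained from $\pi$ by replacing the letter in position $i$ by $\sigma_i^{[z_i+t]}$. *)

theory Defs
  imports "HOL-Combinatorics.Combinatorics"
begin

text \<open>Elements of the wreath product C_r wr S_n: pairs (sigma, z) with sigma a permutation
  of {1..n} (identity outside) and z a colour vector with z i in {0..r-1} for i in {1..n},
  z i = 0 outside {1..n}.\<close>

type_synonym cperm = "(nat \<Rightarrow> nat) \<times> (nat \<Rightarrow> nat)"

definition Grn :: "nat \<Rightarrow> nat \<Rightarrow> cperm set" where
  "Grn r n = {(\<sigma>, z). \<sigma> permutes {1..n} \<and> (\<forall>i. z i < r) \<and> (\<forall>i. i \<notin> {1..n} \<longrightarrow> z i = 0)}"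

definition gmult :: "nat \<Rightarrow> cperm \<Rightarrow> cperm \<Rightarrow> cperm" where
  "gmult r x y = (fst x \<circ> fst y, (\<lambda>k. (snd y k + snd x (fst y k)) mod r))"

definition gone :: cperm where
  "gone = (id, (\<lambda>_. 0))"

text \<open>The element (i^[t] j): for i < j the transposition of positions i, j with colour t at
  position j and colour -t at position i; for i = j the identity with colour t at i.\<close>
definition crefl :: "nat \<Rightarrow> nat \<Rightarrow> nat \<Rightarrow> nat \<Rightarrow> cperm" where
  "crefl r i t j =
     (if i = j then (id, (\<lambda>k. if k = i then t mod r else 0))
      else (transpose i j,
            (\<lambda>k. if k = j then t mod r else if k = i then (r - t mod r) mod r else 0)))"

type_synonym galg = "cperm \<Rightarrow> int"

definition delta :: "cperm \<Rightarrow> galg" where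
  "delta g = (\<lambda>h. if h = g then 1 else 0)"

definition ga_mult :: "nat \<Rightarrow> nat \<Rightarrow> galg \<Rightarrow> galg \<Rightarrow> galg" where
  "ga_mult r n a b = (\<lambda>g. \<Sum>x\<in>Grn r n. \<Sum>y\<in>Grn r n. if gmult r x y = g then a x * b y else 0)"

definition Phi :: "nat \<Rightarrow> nat \<Rightarrow> galg" where
  "Phi r j =
    (if j = 1 then (\<lambda>g. delta gone g + (\<Sum>t\<in>{1..r-1}. delta (crefl r 1 t 1) g))
     else (\<lambda>g. delta gone g + (\<Sum>i\<in>{1..j-1}. delta (crefl r i 0 j) g)
              + (\<Sum>t\<in>{1..r-1}. \<Sum>i\<in>{1..j}. delta (crefl r i t j) g)))"

fun prodPhi :: "nat \<Rightarrow> nat \<Rightarrow> nat \<Rightarrow> galg" where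
  "prodPhi r n 0 = delta gone"
| "prodPhi r n (Suc k) = ga_mult r n (prodPhi r n k) (Phi r (Suc k))"

end

theory Submission
  imports Defs
begin

lemma Grn_mem: "(s, z) \<in> Grn r n \<longleftrightarrow> s permutes {1..n} \<and> (\<forall>i. z i < r) \<and> (\<forall>i. i \<notin> {1..n} \<longrightarrow> z i = 0)"
  by (simp add: Grn_def)

lemma finite_Grn: "finite (Grn r n)"
proof -
  have "Grn r n \<subseteq> {p. p permutes {1..n}} \<times> {f. \<forall>x. (x \<in> {1..n} \<longrightarrow> f x \<in> {..<r}) \<and> (x \<notin> {1..n} \<longrightarrow> f x = 0)}"
    by (auto simp: Grn_def)
  moreover have "finite ({p. p permutes {1..n}} \<times> {f. \<forall>x. (x \<in> {1..n} \<longrightarrow> f x \<in> {..<r}) \<and> (x \<notin> {1..n} \<longrightarrow> f x = 0)})"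
    by (intro finite_cartesian_product finite_permutations finite_set_of_finite_funs) auto
  ultimately show ?thesis by (rule finite_subset)
qed

lemma Grn_mono: "k \<le> n \<Longrightarrow> Grn r k \<subseteq> Grn r n"
  by (auto simp: Grn_def intro: permutes_subset)

lemma Grn_0: "r \<ge> 1 \<Longrightarrow> Grn r 0 = {gone}"
  by (auto simp: Grn_def gone_def)

lemma crefl_jj0: "crefl r j 0 j = gone"
  by (auto simp: crefl_def gone_def)

lemma sum_delta: "finite A \<Longrightarrow> (\<Sum>x\<in>A. delta x g) = of_bool (g \<in> A)"
  by (simp add: delta_def)

lemma Phi_alt:
  assumes "r \<ge> 1" "j \<ge> 1"
  shows "Phi r j g = (\<Sum>(i,t)\<in>{1..j}\<times>{..<r}. delta (crefl r i t j) g)"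
proof -
  have R: "{..<r} = insert 0 {1..r-1}" using assms by auto
  have J: "{1..j} = insert j {1..j-1}" using assms by auto
  have "(\<Sum>(i,t)\<in>{1..j}\<times>{..<r}. delta (crefl r i t j) g)
      = (\<Sum>i\<in>{1..j}. \<Sum>t\<in>{..<r}. delta (crefl r i t j) g)"
    by (simp add: sum.cartesian_product)
  also have "\<dots> = (\<Sum>t\<in>{..<r}. \<Sum>i\<in>{1..j}. delta (crefl r i t j) g)"
    by (rule sum.swap)
  also have "\<dots> = (\<Sum>i\<in>{1..j}. delta (crefl r i 0 j) g) + (\<Sum>t\<in>{1..r-1}. \<Sum>i\<in>{1..j}. delta (crefl r i t j) g)"
    by (subst R) simp
  also have "(\<Sum>i\<in>{1..j}. delta (crefl r i 0 j) g) = delta gone g + (\<Sum>i\<in>{1..j-1}. delta (crefl r i 0 j) g)"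
    by (subst J, subst sum.insert) (auto simp: crefl_jj0)
  finally show ?thesis
    using assms by (auto simp: Phi_def)
qed

lemma mod_cancel_nat:
  fixes a b c r :: nat
  assumes "(a + b) mod r = (a + c) mod r" "b < r" "c < r"
  shows "b = c"
proof -
  have "\<And>b c. (a + b) mod r = (a + c) mod r \<Longrightarrow> b < r \<Longrightarrow> c < r \<Longrightarrow> b \<le> c \<Longrightarrow> b = c"
  proof -
    fix b c assume h: "(a + b) mod r = (a + c) mod r" "b < r" "c < r" "b \<le> c"
    then have "r dvd (a + c) - (a + b)" by (subst mod_eq_dvd_iff_nat[symmetric]) auto
    then have "r dvd c - b" by simp
    moreover have "c - b < r" using h by auto
    ultimately show "b = c" using h(4) by (metis dvd_imp_le diff_is_0_eq le_antisym not_le zero_less_diff)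
  qed
  then show ?thesis using assms by (metis nat_le_linear)
qed

lemma right_cancel:
  assumes "gmult r (s, z) y = gmult r (s', z') y"
    and inv: "\<And>m. fst y (fst y m) = m"
    and "\<And>i. z i < r" "\<And>i. z' i < r"
  shows "s = s' \<and> z = z'"
proof
  have "s \<circ> fst y = s' \<circ> fst y" using assms(1) by (simp add: gmult_def)
  then have "\<And>m. s (fst y (fst y m)) = s' (fst y (fst y m))" by (metis comp_apply)
  then show "s = s'" using inv by auto
next
  have e: "\<And>m. (snd y m + z (fst y m)) mod r = (snd y m + z' (fst y m)) mod r"
    using assms(1) by (simp add: gmult_def fun_eq_iff)
  have "\<And>m. z (fst y (fst y m)) = z' (fst y (fst y m))"
    using e mod_cancel_nat assms(3,4) by blast
  then show "z = z'" using inv by auto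
qed

lemma fst_crefl: "fst (crefl r i t j) = (if i = j then id else transpose i j)"
  by (simp add: crefl_def)

lemma crefl_inv: "fst (crefl r i t j) (fst (crefl r i t j) m) = m"
  by (simp add: crefl_def)


lemma crefl_perm: "i \<in> S \<Longrightarrow> j \<in> S \<Longrightarrow> fst (crefl r i t j) permutes S"
  by (auto simp: fst_crefl permutes_id permutes_swap_id)

lemma crefl_out: "m \<noteq> i \<Longrightarrow> m \<noteq> j \<Longrightarrow> fst (crefl r i t j) m = m \<and> snd (crefl r i t j) m = 0"
  by (auto simp: crefl_def)

lemma closure:
  assumes "r \<ge> 1" "x \<in> Grn r k" "i \<in> {1..Suc k}" "t < r"
  shows "gmult r x (crefl r i t (Suc k)) \<in> Grn r (Suc k)"
proof -
  obtain s z where x: "x = (s, z)" by fastforce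
  have s: "s permutes {1..k}" and z: "\<And>i. z i < r" "\<And>i. i \<notin> {1..k} \<Longrightarrow> z i = 0"
    using assms(2) x by (auto simp: Grn_mem)
  have s': "s permutes {1..Suc k}" using s by (rule permutes_subset) auto
  have tau: "fst (crefl r i t (Suc k)) permutes {1..Suc k}" using assms(3) by (intro crefl_perm) auto
  have "s \<circ> fst (crefl r i t (Suc k)) permutes {1..Suc k}" using permutes_compose[OF tau s'] .
  moreover have "\<And>m. m \<notin> {1..Suc k} \<Longrightarrow> (snd (crefl r i t (Suc k)) m + z (fst (crefl r i t (Suc k)) m)) mod r = 0"
  proof -
    fix m assume m: "m \<notin> {1..Suc k}"
    then have "m \<noteq> i" "m \<noteq> Suc k" using assms(3) by auto
    moreover have "z m = 0" using z(2) m by auto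
    ultimately show "(snd (crefl r i t (Suc k)) m + z (fst (crefl r i t (Suc k)) m)) mod r = 0"
      using crefl_out by simp
  qed
  ultimately show ?thesis using assms(1) by (simp add: x gmult_def Grn_mem)
qed

lemma neg_mod_inj:
  fixes t t' r :: nat
  assumes "t < r" "t' < r" "(r - t) mod r = (r - t') mod r"
  shows "t = t'"
proof (cases "t = 0")
  case True
  then show ?thesis using assms by (cases "t' = 0") auto
next
  case False
  then show ?thesis using assms by (cases "t' = 0") auto
qed

lemma uniq:
  assumes "r \<ge> 1" "x \<in> Grn r k" "x' \<in> Grn r k" "i \<in> {1..Suc k}" "i' \<in> {1..Suc k}"
    "t < r" "t' < r"
    and eq: "gmult r x (crefl r i t (Suc k)) = gmult r x' (crefl r i' t' (Suc k))"
  shows "x = x' \<and> i = i' \<and> t = t'"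
proof -
  obtain s z where x: "x = (s, z)" by fastforce
  obtain s' z' where x': "x' = (s', z')" by fastforce
  have s: "s permutes {1..k}" and z: "\<And>i. z i < r" "\<And>i. i \<notin> {1..k} \<Longrightarrow> z i = 0"
    using assms(2) x by (auto simp: Grn_mem)
  have s': "s' permutes {1..k}" and z': "\<And>i. z' i < r" "\<And>i. i \<notin> {1..k} \<Longrightarrow> z' i = 0"
    using assms(3) x' by (auto simp: Grn_mem)
  have sj: "s (Suc k) = Suc k" "s' (Suc k) = Suc k" using s s' by (auto intro: permutes_not_in)
  have zj: "z (Suc k) = 0" "z' (Suc k) = 0" using z z' by auto
  have tauj: "\<And>i t. fst (crefl r i t (Suc k)) i = Suc k" by (simp add: fst_crefl)
  have f: "s \<circ> fst (crefl r i t (Suc k)) = s' \<circ> fst (crefl r i' t' (Suc k))"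
    using eq by (simp add: x x' gmult_def)
  have perm: "s' \<circ> fst (crefl r i' t' (Suc k)) permutes {1..Suc k}"
    using assms(5) s' by (intro permutes_compose crefl_perm) (auto intro: permutes_subset)
  have "(s' \<circ> fst (crefl r i' t' (Suc k))) i = (s' \<circ> fst (crefl r i' t' (Suc k))) i'"
    using f[symmetric] tauj sj by (metis comp_apply)
  then have ii: "i = i'" using permutes_inj[OF perm] by (metis injD)
  have "(snd (crefl r i t (Suc k)) i + z (fst (crefl r i t (Suc k)) i)) mod r
      = (snd (crefl r i' t' (Suc k)) i + z' (fst (crefl r i' t' (Suc k)) i)) mod r"
    using eq by (simp add: x x' gmult_def fun_eq_iff)
  then have "snd (crefl r i t (Suc k)) i mod r = snd (crefl r i t' (Suc k)) i mod r"
    using tauj zj ii by simp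
  then have tt: "t = t'"
    using assms(6,7) neg_mod_inj[of t r t'] by (auto simp: crefl_def split: if_splits)
  have "s = s' \<and> z = z'"
    using eq ii tt by (intro right_cancel[OF _ crefl_inv z(1) z'(1)]) (simp add: x x')
  then show ?thesis using ii tt x x' by simp
qed

lemma neg_neg_mod:
  fixes c r :: nat
  assumes "c < r"
  shows "(r - (r - c) mod r) mod r = c"
proof (cases "c = 0")
  case True then show ?thesis by simp
next
  case False
  then have "(r - c) mod r = r - c" using assms by simp
  then show ?thesis using assms False by simp
qed

lemma exist:
  assumes "r \<ge> 1" "g \<in> Grn r (Suc k)"
  shows "\<exists>x\<in>Grn r k. \<exists>i\<in>{1..Suc k}. \<exists>t<r. gmult r x (crefl r i t (Suc k)) = g"
proof -
  obtain s z where g: "g = (s, z)" by fastforce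
  have s: "s permutes {1..Suc k}" and z: "\<And>i. z i < r" "\<And>i. i \<notin> {1..Suc k} \<Longrightarrow> z i = 0"
    using assms(2) g by (auto simp: Grn_mem)
  have "Suc k \<in> s ` {1..Suc k}" using permutes_image[OF s] by simp
  then obtain p where p: "p \<in> {1..Suc k}" "s p = Suc k" by auto
  show ?thesis
  proof (cases "p = Suc k")
    case True
    define x where "x = (s, z(Suc k := 0))"
    have "s permutes {1..k}"
      using s by (rule permutes_superset) (use p True in \<open>auto simp: le_Suc_eq\<close>)
    then have xG: "x \<in> Grn r k" using z assms(1) by (auto simp: x_def Grn_mem)
    have "gmult r x (crefl r (Suc k) (z (Suc k)) (Suc k)) = g"
      using z(1) by (auto simp: x_def g gmult_def crefl_def fun_eq_iff)
    then show ?thesis using xG z(1) by (intro bexI[of _ x] bexI[of _ "Suc k"]) auto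
  next
    case False
    define t where "t = (r - z p) mod r"
    have tr: "t < r" using assms(1) by (simp add: t_def)
    have pk: "p \<in> {1..k}" using p False by auto
    define x where "x = (s \<circ> transpose p (Suc k),
       (\<lambda>m. if m = p then (z (Suc k) + r - t) mod r else if m = Suc k then 0 else z m))"
    have "s \<circ> transpose p (Suc k) permutes {1..Suc k}"
      using s p by (intro permutes_compose permutes_swap_id) auto
    then have "s \<circ> transpose p (Suc k) permutes {1..k}"
      by (rule permutes_superset) (use p in \<open>auto simp: le_Suc_eq\<close>)
    then have xG: "x \<in> Grn r k" using z assms(1) pk by (auto simp: x_def Grn_mem)
    have "gmult r x (crefl r p t (Suc k)) = g"
    proof -
      have f: "s \<circ> transpose p (Suc k) \<circ> transpose p (Suc k) = s"
        by (simp add: comp_assoc)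
      have m1: "(t + (z (Suc k) + r - t) mod r) mod r = z (Suc k)"
      proof -
        have "(t + (z (Suc k) + r - t) mod r) mod r = (t + (z (Suc k) + r - t)) mod r"
          by (simp add: mod_add_right_eq)
        also have "t + (z (Suc k) + r - t) = z (Suc k) + r" using tr by simp
        finally show ?thesis using z(1) by simp
      qed
      have m2: "(r - t) mod r = z p" unfolding t_def using neg_neg_mod[OF z(1)] .
      show ?thesis
        using False f m1 m2 tr z(1)
        by (auto simp: x_def g gmult_def crefl_def fun_eq_iff)
    qed
    then show ?thesis using xG tr p by blast
  qed
qed

lemma crefl_Grn:
  assumes "r \<ge> 1" "i \<in> {1..j}" "j \<le> n" "t < r"
  shows "crefl r i t j \<in> Grn r n"
proof -
  have "fst (crefl r i t j) permutes {1..n}" using assms by (intro crefl_perm) auto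
  moreover have "\<forall>m. snd (crefl r i t j) m < r" using assms(1) by (auto simp: crefl_def)
  moreover have "\<forall>m. m \<notin> {1..n} \<longrightarrow> snd (crefl r i t j) m = 0"
    using assms crefl_out by (metis atLeastAtMost_iff le_trans)
  ultimately show ?thesis by (metis Grn_mem prod.collapse)
qed

lemma count_eq:
  assumes "r \<ge> 1"
  shows "card ((Grn r k \<times> ({1..Suc k} \<times> {..<r})) \<inter>
           {p. gmult r (fst p) (crefl r (fst (snd p)) (snd (snd p)) (Suc k)) = g})
         = (if g \<in> Grn r (Suc k) then 1 else 0)"
proof (cases "g \<in> Grn r (Suc k)")
  case True
  then obtain x i t where h: "x \<in> Grn r k" "i \<in> {1..Suc k}" "t < r"
    "gmult r x (crefl r i t (Suc k)) = g"
    using exist[OF assms] by blast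
  have "(Grn r k \<times> ({1..Suc k} \<times> {..<r})) \<inter>
           {p. gmult r (fst p) (crefl r (fst (snd p)) (snd (snd p)) (Suc k)) = g} = {(x, (i, t))}"
  proof (rule set_eqI)
    fix p :: "cperm \<times> nat \<times> nat"
    obtain x' i' t' where p: "p = (x', (i', t'))" by (metis prod.collapse)
    show "p \<in> (Grn r k \<times> ({1..Suc k} \<times> {..<r})) \<inter>
           {p. gmult r (fst p) (crefl r (fst (snd p)) (snd (snd p)) (Suc k)) = g} \<longleftrightarrow> p \<in> {(x, (i, t))}"
    proof
      assume "p \<in> (Grn r k \<times> ({1..Suc k} \<times> {..<r})) \<inter>
           {p. gmult r (fst p) (crefl r (fst (snd p)) (snd (snd p)) (Suc k)) = g}"
      then have a: "x' \<in> Grn r k" "i' \<in> {1..Suc k}" "t' < r" "gmult r x' (crefl r i' t' (Suc k)) = g"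
        by (simp_all add: p)
      have "x = x' \<and> i = i' \<and> t = t'"
        by (rule uniq[OF assms h(1) a(1) h(2) a(2) h(3) a(3)]) (simp add: h(4) a(4))
      then show "p \<in> {(x, (i, t))}" by (simp add: p)
    next
      assume "p \<in> {(x, (i, t))}"
      then show "p \<in> (Grn r k \<times> ({1..Suc k} \<times> {..<r})) \<inter>
           {p. gmult r (fst p) (crefl r (fst (snd p)) (snd (snd p)) (Suc k)) = g}"
        using h by auto
    qed
  qed
  then show ?thesis using True by simp
next
  case False
  have "(Grn r k \<times> ({1..Suc k} \<times> {..<r})) \<inter>
           {p. gmult r (fst p) (crefl r (fst (snd p)) (snd (snd p)) (Suc k)) = g} = {}"
  proof -
    have "\<And>x i t. x \<in> Grn r k \<Longrightarrow> i \<in> {1..Suc k} \<Longrightarrow> t < r \<Longrightarrow> gmult r x (crefl r i t (Suc k)) \<noteq> g"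
      using closure[OF assms] False by metis
    then show ?thesis by fastforce
  qed
  then show ?thesis using False by simp
qed

lemma main:
  assumes "r \<ge> 1"
  shows "k \<le> n \<Longrightarrow> prodPhi r n k = (\<lambda>g. of_bool (g \<in> Grn r k))"
proof (induction k)
  case 0
  show ?case using Grn_0[OF assms] by (auto simp: delta_def fun_eq_iff)
next
  case (Suc k)
  have IH: "prodPhi r n k = (\<lambda>g. of_bool (g \<in> Grn r k))" using Suc by simp
  let ?GN = "Grn r n" and ?G = "Grn r k" and ?I = "{1..Suc k} \<times> {..<r}"
  let ?c = "\<lambda>q. crefl r (fst q) (snd q) (Suc k)"
  have fGN: "finite ?GN" by (rule finite_Grn)
  have fI: "finite ?I" by simp
  have cG: "\<And>q. q \<in> ?I \<Longrightarrow> ?c q \<in> ?GN"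
    using Suc.prems by (auto intro!: crefl_Grn[OF assms])
  have GG: "?G \<subseteq> ?GN" using Suc.prems by (intro Grn_mono) simp
  have PhiA: "\<And>y. Phi r (Suc k) y = (\<Sum>q\<in>?I. delta (?c q) y)"
    using Phi_alt[OF assms, of "Suc k"] by (simp add: split_beta)
  show ?case
  proof
    fix g
    have inner: "(\<Sum>y\<in>?GN. if gmult r x y = g then a * Phi r (Suc k) y else 0)
        = (\<Sum>q\<in>?I. if gmult r x (?c q) = g then a else 0)" for x and a :: int
    proof -
      have "(\<Sum>y\<in>?GN. if gmult r x y = g then a * Phi r (Suc k) y else 0)
          = (\<Sum>y\<in>?GN. \<Sum>q\<in>?I. if gmult r x y = g then a * delta (?c q) y else 0)"
        by (rule sum.cong) (auto simp: PhiA sum_distrib_left)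
      also have "\<dots> = (\<Sum>q\<in>?I. \<Sum>y\<in>?GN. if gmult r x y = g then a * delta (?c q) y else 0)"
        by (rule sum.swap)
      also have "\<dots> = (\<Sum>q\<in>?I. if gmult r x (?c q) = g then a else 0)"
      proof (rule sum.cong[OF refl])
        fix q assume q: "q \<in> ?I"
        have "(\<Sum>y\<in>?GN. if gmult r x y = g then a * delta (?c q) y else 0)
            = (\<Sum>y\<in>?GN. if y = ?c q then (if gmult r x y = g then a else 0) else 0)"
          by (rule sum.cong) (auto simp: delta_def)
        also have "\<dots> = (if gmult r x (?c q) = g then a else 0)"
          using cG[OF q] fGN by (simp add: sum.delta)
        finally show "(\<Sum>y\<in>?GN. if gmult r x y = g then a * delta (?c q) y else 0)
            = (if gmult r x (?c q) = g then a else 0)" .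
      qed
      finally show ?thesis .
    qed
    have "prodPhi r n (Suc k) g
        = (\<Sum>x\<in>?GN. \<Sum>y\<in>?GN. if gmult r x y = g then of_bool (x \<in> ?G) * Phi r (Suc k) y else 0)"
      by (simp add: IH ga_mult_def)
    also have "\<dots> = (\<Sum>x\<in>?GN. \<Sum>q\<in>?I. if gmult r x (?c q) = g then of_bool (x \<in> ?G) else 0)"
      by (simp only: inner)
    also have "\<dots> = (\<Sum>x\<in>?GN. of_bool (x \<in> ?G) * (\<Sum>q\<in>?I. of_bool (gmult r x (?c q) = g)))"
      by (rule sum.cong) (auto simp: sum_distrib_left of_bool_def intro!: sum.cong)
    also have "\<dots> = (\<Sum>x\<in>?G. (\<Sum>q\<in>?I. of_bool (gmult r x (?c q) = g)))"
      using fGN GG by (simp add: Int_absorb1)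
    also have "\<dots> = (\<Sum>p\<in>?G \<times> ?I. of_bool (gmult r (fst p) (?c (snd p)) = g))"
      by (simp only: sum.cartesian_product' fst_conv snd_conv)
    also have "\<dots> = of_nat (card ((?G \<times> ?I) \<inter> {p. gmult r (fst p) (?c (snd p)) = g}))"
      using finite_subset[OF GG fGN] fI by simp
    also have "\<dots> = of_bool (g \<in> Grn r (Suc k))"
      using count_eq[OF assms, of k g] by simp
    finally show "prodPhi r n (Suc k) g = of_bool (g \<in> Grn r (Suc k))" .
  qed
qed

theorem lemma2p2:
  fixes r n :: nat
  assumes "r \<ge> 1" and "n \<ge> 1"
  shows "prodPhi r n n = (\<lambda>g. \<Sum>\<pi>\<in>Grn r n. delta \<pi> g)"
  using main[OF assms(1) order_refl] sum_delta[OF finite_Grn] by simp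

end
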